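(* Let $T_0$ and $T_0^+$ be the theories described in the context. Then: (1) If $M$ is a model of $T_0^+$, then $Q_0^M$, $Q_1^M$ and $Q_2^M$ are all non-empty, and $F_0^M$ and $F_3^M$ are onto (onto $Q_0^M$). (2) Every model $M$ of $T_0$ in which $Q_0^M\neq\emptyset$ and $Q_2^M\neq\emptyset$ and in which $F_0^M$ and $F_3^M$ are onto $Q_0^M$ can be extended to a model of $T_0^+$ with the same universe (i.e. by extending the partial functions); and every model of $T_0^+$ is a model of $T_0$. (3) There are models $M$ of $T_0$ with $Q_0^M\neq\emptyset$, $Q_2^M\neq\emptyset$ and $F_3^M$ onto $Q_0^M$ which cannot be extended to a model of $T_0^+$ with the same universe. (4) Every model of $T_0$ is a submodel of a model of $T_0^+$. (5) $T_0^+$ has the amalgamation property and the joint embedding property.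
   Context: The language consists of unary predicates $Q_0,Q_1,Q_2$ and function symbols $F_0,F_1,F_2,F_3$ ($F_1$ two-place, the others one-place), interpreted as possibly partial functions. $T_0$ is the (incomplete) theory saying: (i) $Q_0,Q_1,Q_2$ partition the universe; (ii) $F_0$ is a partial function from $Q_1$ to $Q_0$; (iii) $F_1$ is a partial two-place function from $Q_2\times Q_0$ to $Q_1$; (iv) $F_2$ is a partial function from $Q_0$ to $Q_2$; (v) $F_3$ is a partial function from $Q_2$ to $Q_0$; (vi) $F_0(F_1(z,x))=x$ for all $(z,x)$ in the domain of $F_1$; (vii) $F_3(F_2(x))=x$ for all $x$ (in the domain of $F_2$). $T_0^+$ is like $T_0$ but additionally requires $F_0,F_1,F_2,F_3$ to be total on $Q_1$, $Q_2\times Q_0$, $Q_0$, $Q_2$ respectively. Submodel convention: $M$ is a submodel of $N$ if $|M|\subseteq|N|$, $Q_i^M=Q_i^N\cap|M|$, and each partial function of $N$ extends the corresponding partial function of $M$ (the fact that a function is undefined at some argument in $M$ need not be preserved in $N$). *)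

theory Defs
  imports Main
begin

record 'a str =
  univ :: "'a set"
  Q0 :: "'a set"
  Q1 :: "'a set"
  Q2 :: "'a set"
  F0 :: "'a \<Rightarrow> 'a option"
  F1 :: "'a \<Rightarrow> 'a \<Rightarrow> 'a option"
  F2 :: "'a \<Rightarrow> 'a option"
  F3 :: "'a \<Rightarrow> 'a option"

definition T0 :: "'a str \<Rightarrow> bool" where
  "T0 M \<longleftrightarrow>
     univ M \<noteq> {} \<and>
     Q0 M \<union> Q1 M \<union> Q2 M = univ M \<and>
     Q0 M \<inter> Q1 M = {} \<and> Q0 M \<inter> Q2 M = {} \<and> Q1 M \<inter> Q2 M = {} \<and>
     (\<forall>x y. F0 M x = Some y \<longrightarrow> x \<in> Q1 M \<and> y \<in> Q0 M) \<and>
     (\<forall>z x y. F1 M z x = Some y \<longrightarrow> z \<in> Q2 M \<and> x \<in> Q0 M \<and> y \<in> Q1 M) \<and>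
     (\<forall>x y. F2 M x = Some y \<longrightarrow> x \<in> Q0 M \<and> y \<in> Q2 M) \<and>
     (\<forall>x y. F3 M x = Some y \<longrightarrow> x \<in> Q2 M \<and> y \<in> Q0 M) \<and>
     (\<forall>z x y. F1 M z x = Some y \<longrightarrow> F0 M y = Some x) \<and>
     (\<forall>x z. F2 M x = Some z \<longrightarrow> F3 M z = Some x)"

definition T0plus :: "'a str \<Rightarrow> bool" where
  "T0plus M \<longleftrightarrow> T0 M \<and>
     (\<forall>y\<in>Q1 M. F0 M y \<noteq> None) \<and>
     (\<forall>z\<in>Q2 M. \<forall>x\<in>Q0 M. F1 M z x \<noteq> None) \<and>
     (\<forall>x\<in>Q0 M. F2 M x \<noteq> None) \<and>
     (\<forall>z\<in>Q2 M. F3 M z \<noteq> None)"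

definition onto_F0 :: "'a str \<Rightarrow> bool" where
  "onto_F0 M \<longleftrightarrow> (\<forall>x\<in>Q0 M. \<exists>y. F0 M y = Some x)"

definition onto_F3 :: "'a str \<Rightarrow> bool" where
  "onto_F3 M \<longleftrightarrow> (\<forall>x\<in>Q0 M. \<exists>z. F3 M z = Some x)"

definition submodel :: "'a str \<Rightarrow> 'a str \<Rightarrow> bool" where
  "submodel M N \<longleftrightarrow>
     univ M \<subseteq> univ N \<and>
     Q0 M = Q0 N \<inter> univ M \<and> Q1 M = Q1 N \<inter> univ M \<and> Q2 M = Q2 N \<inter> univ M \<and>
     F0 M \<subseteq>\<^sub>m F0 N \<and> (\<forall>z. F1 M z \<subseteq>\<^sub>m F1 N z) \<and>
     F2 M \<subseteq>\<^sub>m F2 N \<and> F3 M \<subseteq>\<^sub>m F3 N"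

definition extends_same_univ :: "'a str \<Rightarrow> 'a str \<Rightarrow> bool" where
  "extends_same_univ M N \<longleftrightarrow> submodel M N \<and> univ N = univ M"

definition embedding :: "('a \<Rightarrow> 'b) \<Rightarrow> 'a str \<Rightarrow> 'b str \<Rightarrow> bool" where
  "embedding h M N \<longleftrightarrow>
     inj_on h (univ M) \<and> h ` univ M \<subseteq> univ N \<and>
     (\<forall>x\<in>univ M. (x \<in> Q0 M \<longleftrightarrow> h x \<in> Q0 N) \<and> (x \<in> Q1 M \<longleftrightarrow> h x \<in> Q1 N)
                  \<and> (x \<in> Q2 M \<longleftrightarrow> h x \<in> Q2 N)) \<and>
     (\<forall>x y. F0 M x = Some y \<longrightarrow> F0 N (h x) = Some (h y)) \<and>
     (\<forall>z x y. F1 M z x = Some y \<longrightarrow> F1 N (h z) (h x) = Some (h y)) \<and>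
     (\<forall>x y. F2 M x = Some y \<longrightarrow> F2 N (h x) = Some (h y)) \<and>
     (\<forall>x y. F3 M x = Some y \<longrightarrow> F3 N (h x) = Some (h y))"

end

theory Submission
  imports Defs
begin


lemma T0D:
  assumes "T0 M"
  shows "univ M \<noteq> {}" "Q0 M \<union> Q1 M \<union> Q2 M = univ M"
    "Q0 M \<inter> Q1 M = {}" "Q0 M \<inter> Q2 M = {}" "Q1 M \<inter> Q2 M = {}"
    "\<forall>x y. F0 M x = Some y \<longrightarrow> x \<in> Q1 M \<and> y \<in> Q0 M"
    "\<forall>z x y. F1 M z x = Some y \<longrightarrow> z \<in> Q2 M \<and> x \<in> Q0 M \<and> y \<in> Q1 M"
    "\<forall>x y. F2 M x = Some y \<longrightarrow> x \<in> Q0 M \<and> y \<in> Q2 M"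
    "\<forall>x y. F3 M x = Some y \<longrightarrow> x \<in> Q2 M \<and> y \<in> Q0 M"
    "\<forall>z x y. F1 M z x = Some y \<longrightarrow> F0 M y = Some x"
    "\<forall>x z. F2 M x = Some z \<longrightarrow> F3 M z = Some x"
  using assms unfolding T0_def by simp_all

lemma T0I:
  assumes "univ M \<noteq> {}" "Q0 M \<union> Q1 M \<union> Q2 M = univ M"
    "Q0 M \<inter> Q1 M = {}" "Q0 M \<inter> Q2 M = {}" "Q1 M \<inter> Q2 M = {}"
    "\<forall>x y. F0 M x = Some y \<longrightarrow> x \<in> Q1 M \<and> y \<in> Q0 M"
    "\<forall>z x y. F1 M z x = Some y \<longrightarrow> z \<in> Q2 M \<and> x \<in> Q0 M \<and> y \<in> Q1 M"
    "\<forall>x y. F2 M x = Some y \<longrightarrow> x \<in> Q0 M \<and> y \<in> Q2 M"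
    "\<forall>x y. F3 M x = Some y \<longrightarrow> x \<in> Q2 M \<and> y \<in> Q0 M"
    "\<forall>z x y. F1 M z x = Some y \<longrightarrow> F0 M y = Some x"
    "\<forall>x z. F2 M x = Some z \<longrightarrow> F3 M z = Some x"
  shows "T0 M"
  using assms unfolding T0_def by simp

lemma T0plusD:
  assumes "T0plus M"
  shows "T0 M" "\<And>y. y \<in> Q1 M \<Longrightarrow> F0 M y \<noteq> None"
     "\<And>z x. z \<in> Q2 M \<Longrightarrow> x \<in> Q0 M \<Longrightarrow> F1 M z x \<noteq> None"
     "\<And>x. x \<in> Q0 M \<Longrightarrow> F2 M x \<noteq> None"
     "\<And>z. z \<in> Q2 M \<Longrightarrow> F3 M z \<noteq> None"
  using assms unfolding T0plus_def by simp_all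

lemma T0_sub:
  assumes "T0 M"
  shows "Q0 M \<subseteq> univ M" "Q1 M \<subseteq> univ M" "Q2 M \<subseteq> univ M"
  using T0D(2)[OF assms] by auto

definition cex :: "nat str" where
  "cex = \<lparr>univ = {0,1}, Q0 = {0}, Q1 = {}, Q2 = {1}, F0 = (\<lambda>_. None), F1 = (\<lambda>_ _. None),
     F2 = (\<lambda>_. None), F3 = (\<lambda>z. if z = 1 then Some 0 else None)\<rparr>"

lemma part3: "\<exists>M :: nat str. T0 M \<and> Q0 M \<noteq> {} \<and> Q2 M \<noteq> {} \<and> onto_F3 M \<and>
        \<not> (\<exists>N. T0plus N \<and> extends_same_univ M N)"
proof (intro exI[of _ cex] conjI)
  show "T0 cex" by (rule T0I) (auto simp: cex_def)
  show "Q0 cex \<noteq> {}" "Q2 cex \<noteq> {}" unfolding cex_def by auto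
  show "onto_F3 cex" unfolding onto_F3_def cex_def by auto
  show "\<not> (\<exists>N. T0plus N \<and> extends_same_univ cex N)"
  proof
    assume "\<exists>N. T0plus N \<and> extends_same_univ cex N"
    then obtain N where N: "T0plus N" "extends_same_univ cex N" by blast
    have u: "univ N = {0,1}" "Q1 N \<inter> {0,1} = {}" "Q2 N \<inter> {0,1} = {1}" "Q0 N \<inter> {0,1} = {0}"
      using N(2) unfolding extends_same_univ_def submodel_def cex_def by auto
    have T: "T0 N" by (rule T0plusD(1)[OF N(1)])
    have "Q1 N \<subseteq> {0,1}" using T0_sub(2)[OF T] u(1) by simp
    then have "Q1 N = {}" using u(2) by (simp add: Int_absorb2)
    have "1 \<in> Q2 N \<inter> {0,1}" by (simp only: u(3)) simp
    then have "1 \<in> Q2 N" by (rule IntD1)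
    have "0 \<in> Q0 N \<inter> {0,1}" by (simp only: u(4)) simp
    then have "0 \<in> Q0 N" by (rule IntD1)
    obtain y where "F1 N 1 0 = Some y" using T0plusD(3)[OF N(1) \<open>1 \<in> Q2 N\<close> \<open>0 \<in> Q0 N\<close>] by blast
    then have "y \<in> Q1 N" using T0D(7)[OF T] by blast
    then show False using \<open>Q1 N = {}\<close> by blast
  qed
qed


lemma part1:
  assumes a: "T0plus M"
  shows "Q0 M \<noteq> {} \<and> Q1 M \<noteq> {} \<and> Q2 M \<noteq> {} \<and> onto_F0 M \<and> onto_F3 M"
proof -
  have T: "T0 M" by (rule T0plusD(1)[OF a])
  have q0: "Q0 M \<noteq> {}"
  proof
    assume e: "Q0 M = {}"
    obtain u where u: "u \<in> univ M" using T0D(1)[OF T] by blast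
    have "u \<in> Q1 M \<or> u \<in> Q2 M" using u e T0D(2)[OF T] by blast
    then show False
    proof
      assume "u \<in> Q1 M"
      then obtain v where "F0 M u = Some v" using T0plusD(2)[OF a] by blast
      then have "v \<in> Q0 M" using T0D(6)[OF T] by blast
      then show False using e by blast
    next
      assume "u \<in> Q2 M"
      then obtain v where "F3 M u = Some v" using T0plusD(5)[OF a] by blast
      then have "v \<in> Q0 M" using T0D(9)[OF T] by blast
      then show False using e by blast
    qed
  qed
  then obtain x where x: "x \<in> Q0 M" by blast
  then obtain z where z: "F2 M x = Some z" using T0plusD(4)[OF a] by blast
  then have z2: "z \<in> Q2 M" using T0D(8)[OF T] by blast
  then obtain y where "F1 M z x = Some y" using T0plusD(3)[OF a _ x] by blast
  then have y: "y \<in> Q1 M" using T0D(7)[OF T] by blast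
  have "onto_F0 M"
    unfolding onto_F0_def
  proof
    fix x assume x: "x \<in> Q0 M"
    obtain y where "F1 M z x = Some y" using T0plusD(3)[OF a z2 x] by blast
    then show "\<exists>y. F0 M y = Some x" using T0D(10)[OF T] by blast
  qed
  moreover have "onto_F3 M"
    unfolding onto_F3_def
  proof
    fix x assume x: "x \<in> Q0 M"
    obtain z where "F2 M x = Some z" using T0plusD(4)[OF a x] by blast
    then show "\<exists>z. F3 M z = Some x" using T0D(11)[OF T] by blast
  qed
  ultimately show ?thesis using q0 z2 y by blast
qed

lemma part2a:
  assumes a: "T0 M" "Q0 M \<noteq> {}" "Q2 M \<noteq> {}" "onto_F0 M" "onto_F3 M"
  shows "\<exists>N. T0plus N \<and> extends_same_univ M N"
proof -
  define c0 where "c0 = (SOME x. x \<in> Q0 M)"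
  have c0: "c0 \<in> Q0 M" using a(2) unfolding c0_def by (simp add: some_in_eq)
  define f0 where "f0 = (\<lambda>y. if F0 M y \<noteq> None then F0 M y else if y \<in> Q1 M then Some c0 else None)"
  define f1 where "f1 = (\<lambda>z x. if F1 M z x \<noteq> None then F1 M z x else if z \<in> Q2 M \<and> x \<in> Q0 M then Some (SOME y. F0 M y = Some x) else None)"
  define f2 where "f2 = (\<lambda>x. if F2 M x \<noteq> None then F2 M x else if x \<in> Q0 M then Some (SOME z. F3 M z = Some x) else None)"
  define f3 where "f3 = (\<lambda>z. if F3 M z \<noteq> None then F3 M z else if z \<in> Q2 M then Some c0 else None)"
  define N where "N = \<lparr>univ = univ M, Q0 = Q0 M, Q1 = Q1 M, Q2 = Q2 M, F0 = f0, F1 = f1, F2 = f2, F3 = f3\<rparr>"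
  have s0: "F0 M (SOME y. F0 M y = Some x) = Some x" if "x \<in> Q0 M" for x
    using a(4) that unfolding onto_F0_def by (meson someI_ex)
  have s3: "F3 M (SOME z. F3 M z = Some x) = Some x" if "x \<in> Q0 M" for x
    using a(5) that unfolding onto_F3_def by (meson someI_ex)
  note T = T0D[OF a(1)]
  have h0: "\<forall>x y. f0 x = Some y \<longrightarrow> x \<in> Q1 M \<and> y \<in> Q0 M"
  proof (intro allI impI)
    fix x y assume "f0 x = Some y"
    then show "x \<in> Q1 M \<and> y \<in> Q0 M"
      unfolding f0_def using T(6) c0 by (auto split: if_splits)
  qed
  have h1: "\<forall>z x y. f1 z x = Some y \<longrightarrow> z \<in> Q2 M \<and> x \<in> Q0 M \<and> y \<in> Q1 M"
  proof (intro allI impI)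
    fix z x y assume "f1 z x = Some y"
    then show "z \<in> Q2 M \<and> x \<in> Q0 M \<and> y \<in> Q1 M"
      unfolding f1_def using T(7) T(6) s0[of x] by (auto split: if_splits)
  qed
  have h2: "\<forall>x y. f2 x = Some y \<longrightarrow> x \<in> Q0 M \<and> y \<in> Q2 M"
  proof (intro allI impI)
    fix x y assume "f2 x = Some y"
    then show "x \<in> Q0 M \<and> y \<in> Q2 M"
      unfolding f2_def using T(8) T(9) s3[of x] by (auto split: if_splits)
  qed
  have h3: "\<forall>x y. f3 x = Some y \<longrightarrow> x \<in> Q2 M \<and> y \<in> Q0 M"
  proof (intro allI impI)
    fix x y assume "f3 x = Some y"
    then show "x \<in> Q2 M \<and> y \<in> Q0 M"
      unfolding f3_def using T(9) c0 by (auto split: if_splits)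
  qed
  have h4: "\<forall>z x y. f1 z x = Some y \<longrightarrow> f0 y = Some x"
  proof (intro allI impI)
    fix z x y assume "f1 z x = Some y"
    then show "f0 y = Some x"
      unfolding f1_def f0_def using T(10) s0[of x] by (auto split: if_splits)
  qed
  have h5: "\<forall>x z. f2 x = Some z \<longrightarrow> f3 z = Some x"
  proof (intro allI impI)
    fix x z assume "f2 x = Some z"
    then show "f3 z = Some x"
      unfolding f2_def f3_def using T(11) s3[of x] by (auto split: if_splits)
  qed
  have "T0 N"
    unfolding N_def using T(1-5) h0 h1 h2 h3 h4 h5 by (intro T0I) (simp_all only: str.select_convs not_False_eq_True)
  moreover have "T0plus N"
    unfolding T0plus_def
  proof (intro conjI ballI)
    show "T0 N" by fact
    show "F0 N y \<noteq> None" if "y \<in> Q1 N" for y using that unfolding N_def f0_def by simp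
    show "F1 N z x \<noteq> None" if "z \<in> Q2 N" "x \<in> Q0 N" for z x using that unfolding N_def f1_def by simp
    show "F2 N x \<noteq> None" if "x \<in> Q0 N" for x using that unfolding N_def f2_def by simp
    show "F3 N z \<noteq> None" if "z \<in> Q2 N" for z using that unfolding N_def f3_def by simp
  qed
  moreover have "extends_same_univ M N"
    using T0_sub[OF a(1)] unfolding extends_same_univ_def submodel_def N_def map_le_def f0_def f1_def f2_def f3_def by auto
  ultimately show ?thesis by blast
qed

lemma part2b: "T0plus M \<Longrightarrow> T0 M" unfolding T0plus_def by simp



lemma part4:
  fixes M :: "'a str"
  assumes M: "T0 M"
  shows "\<exists>(N :: ('a \<times> nat) str) h. T0plus N \<and> embedding h M N"
proof -
  note T = T0D[OF M]
  define a0 :: 'a where "a0 = undefined"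
  define QA :: "('a \<times> nat) set" where "QA = {p. snd p = 0 \<and> fst p \<in> Q0 M \<or> p = (a0, 1::nat)}"
  define QB :: "('a \<times> nat) set" where "QB = {p. snd p = 0 \<and> fst p \<in> Q1 M \<or> snd p = 2 \<and> fst p \<in> Q0 M \<or> p = (a0, 3::nat)}"
  define QC :: "('a \<times> nat) set" where "QC = {p. snd p = 0 \<and> fst p \<in> Q2 M \<or> snd p = 4 \<and> fst p \<in> Q0 M \<or> p = (a0, 5::nat)}"
  define g0 :: "'a \<times> nat \<Rightarrow> ('a \<times> nat) option" where "g0 = (\<lambda>p. if snd p = 0 then (case F0 M (fst p) of Some b \<Rightarrow> Some (b, 0::nat)
        | None \<Rightarrow> if fst p \<in> Q1 M then Some (a0, 1) else None)
      else if snd p = 2 \<and> fst p \<in> Q0 M then Some (fst p, 0) else if p = (a0, 3) then Some (a0, 1) else None)"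
  define g2 :: "'a \<times> nat \<Rightarrow> ('a \<times> nat) option" where "g2 = (\<lambda>p. if snd p = 0 \<and> fst p \<in> Q0 M then (case F2 M (fst p) of Some b \<Rightarrow> Some (b, 0::nat)
        | None \<Rightarrow> Some (fst p, 4)) else if p = (a0, 1) then Some (a0, 5) else None)"
  define g3 :: "'a \<times> nat \<Rightarrow> ('a \<times> nat) option" where "g3 = (\<lambda>p. if snd p = 0 then (case F3 M (fst p) of Some b \<Rightarrow> Some (b, 0::nat)
        | None \<Rightarrow> if fst p \<in> Q2 M then Some (a0, 1) else None)
      else if snd p = 4 \<and> fst p \<in> Q0 M then Some (fst p, 0) else if p = (a0, 5) then Some (a0, 1) else None)"
  define g1 :: "'a \<times> nat \<Rightarrow> 'a \<times> nat \<Rightarrow> ('a \<times> nat) option" where "g1 = (\<lambda>z x. if z \<in> QC \<and> x \<in> QA then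
        (case (if snd z = 0 \<and> snd x = 0 then F1 M (fst z) (fst x) else None) of Some b \<Rightarrow> Some (b, 0::nat)
         | None \<Rightarrow> Some (fst x, snd x + 2)) else None)"
  define N where "N = \<lparr>univ = QA \<union> QB \<union> QC, Q0 = QA, Q1 = QB, Q2 = QC, F0 = g0, F1 = g1, F2 = g2, F3 = g3\<rparr>"
  have d01: "a \<in> Q0 M \<Longrightarrow> a \<in> Q1 M \<Longrightarrow> False" for a using T(3) by blast
  have d02: "a \<in> Q0 M \<Longrightarrow> a \<in> Q2 M \<Longrightarrow> False" for a using T(4) by blast
  have d12: "a \<in> Q1 M \<Longrightarrow> a \<in> Q2 M \<Longrightarrow> False" for a using T(5) by blast
  have t0: "F0 M a = Some b \<Longrightarrow> a \<in> Q1 M \<and> b \<in> Q0 M" for a b using T(6) by blast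
  have t1: "F1 M z x = Some b \<Longrightarrow> z \<in> Q2 M \<and> x \<in> Q0 M \<and> b \<in> Q1 M" for z x b using T(7) by blast
  have t2: "F2 M a = Some b \<Longrightarrow> a \<in> Q0 M \<and> b \<in> Q2 M" for a b using T(8) by blast
  have t3: "F3 M a = Some b \<Longrightarrow> a \<in> Q2 M \<and> b \<in> Q0 M" for a b using T(9) by blast
  have t10: "F1 M z x = Some b \<Longrightarrow> F0 M b = Some x" for z x b using T(10) by blast
  have t23: "F2 M x = Some b \<Longrightarrow> F3 M b = Some x" for x b using T(11) by blast
  have h0: "\<forall>x y. g0 x = Some y \<longrightarrow> x \<in> QB \<and> y \<in> QA"
  proof (intro allI impI)
    fix x y assume "g0 x = Some y"
    then show "x \<in> QB \<and> y \<in> QA"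
      unfolding g0_def QA_def QB_def using t0 by (auto split: if_splits option.splits)
  qed
  have h1: "\<forall>z x y. g1 z x = Some y \<longrightarrow> z \<in> QC \<and> x \<in> QA \<and> y \<in> QB"
  proof (intro allI impI)
    fix z x y assume "g1 z x = Some y"
    then show "z \<in> QC \<and> x \<in> QA \<and> y \<in> QB"
      unfolding g1_def QA_def QB_def using t1 by (auto split: if_splits option.splits)
  qed
  have h2: "\<forall>x y. g2 x = Some y \<longrightarrow> x \<in> QA \<and> y \<in> QC"
  proof (intro allI impI)
    fix x y assume "g2 x = Some y"
    then show "x \<in> QA \<and> y \<in> QC"
      unfolding g2_def QA_def QC_def using t2 by (auto split: if_splits option.splits)
  qed
  have h3: "\<forall>x y. g3 x = Some y \<longrightarrow> x \<in> QC \<and> y \<in> QA"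
  proof (intro allI impI)
    fix x y assume "g3 x = Some y"
    then show "x \<in> QC \<and> y \<in> QA"
      unfolding g3_def QA_def QC_def using t3 by (auto split: if_splits option.splits)
  qed
  have h4: "\<forall>z x y. g1 z x = Some y \<longrightarrow> g0 y = Some x"
  proof (intro allI impI)
    fix z x y assume a: "g1 z x = Some y"
    obtain a k where x: "x = (a, k)" by (cases x)
    define c where "c = (if snd z = 0 \<and> snd x = 0 then F1 M (fst z) (fst x) else None)"
    have zx: "z \<in> QC \<and> x \<in> QA" using a unfolding g1_def by (simp split: if_splits)
    then have y: "Some y = (case c of Some b \<Rightarrow> Some (b, 0) | None \<Rightarrow> Some (fst x, snd x + 2))"
      using a unfolding g1_def c_def by simp
    show "g0 y = Some x"
    proof (cases c)
      case None
      then have y': "y = (a, k + 2)" using y x by simp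
      have "k = 0 \<and> a \<in> Q0 M \<or> (a, k) = (a0, 1)" using zx x unfolding QA_def by simp
      then show ?thesis
      proof
        assume "k = 0 \<and> a \<in> Q0 M" then show ?thesis using y' x unfolding g0_def by simp
      next
        assume "(a, k) = (a0, 1)" then show ?thesis using y' x unfolding g0_def by simp
      qed
    next
      case (Some b)
      then have k: "snd z = 0" "k = 0" "F1 M (fst z) a = Some b"
        unfolding c_def using x by (simp_all split: if_splits)
      have "y = (b, 0)" using y Some by simp
      moreover have "F0 M b = Some a" using t10[OF k(3)] .
      ultimately show ?thesis using x k(2) unfolding g0_def by simp
    qed
  qed
  have h5: "\<forall>x z. g2 x = Some z \<longrightarrow> g3 z = Some x"
  proof (intro allI impI)
    fix x z assume a: "g2 x = Some z"
    obtain p k where x: "x = (p, k)" by (cases x)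
    show "g3 z = Some x"
    proof (cases "k = 0 \<and> p \<in> Q0 M")
      case True
      show ?thesis
      proof (cases "F2 M p")
        case None
        then have "z = (p, 4)" using a x True unfolding g2_def by simp
        then show ?thesis using x True unfolding g3_def by simp
      next
        case (Some b)
        then have "z = (b, 0)" using a x True unfolding g2_def by simp
        moreover have "F3 M b = Some p" using t23[OF Some] .
        ultimately show ?thesis using x True unfolding g3_def by simp
      qed
    next
      case False
      then have "x = (a0, 1)" "z = (a0, 5)" using a x unfolding g2_def by (simp_all split: if_splits)
      then show ?thesis unfolding g3_def by simp
    qed
  qed
  have dAB: "QA \<inter> QB = {}" unfolding QA_def QB_def using d01 by auto
  have dAC: "QA \<inter> QC = {}" unfolding QA_def QC_def using d02 by auto
  have dBC: "QB \<inter> QC = {}" unfolding QB_def QC_def using d12 by auto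
  have "T0 N"
    unfolding N_def using dAB dAC dBC h0 h1 h2 h3 h4 h5
    by (intro T0I) (simp_all only: str.select_convs, auto simp: QA_def)
  moreover have "T0plus N"
    unfolding T0plus_def
  proof (intro conjI ballI)
    show "T0 N" by fact
    show "F0 N y \<noteq> None" if "y \<in> Q1 N" for y using that unfolding N_def g0_def QB_def
      by (auto split: option.splits)
    show "F1 N z x \<noteq> None" if "z \<in> Q2 N" "x \<in> Q0 N" for z x using that unfolding N_def g1_def
      by (auto split: option.splits)
    show "F2 N x \<noteq> None" if "x \<in> Q0 N" for x using that unfolding N_def g2_def QA_def
      by (auto split: option.splits)
    show "F3 N z \<noteq> None" if "z \<in> Q2 N" for z using that unfolding N_def g3_def QC_def
      by (auto split: option.splits)
  qed
  moreover have "embedding (\<lambda>a. (a, 0::nat)) M N"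
    unfolding embedding_def
  proof (intro conjI)
    show "inj_on (\<lambda>a. (a, 0::nat)) (univ M)" by (simp add: inj_on_def)
    show "(\<lambda>a. (a, 0::nat)) ` univ M \<subseteq> univ N"
    proof
      fix p assume "p \<in> (\<lambda>a. (a, 0::nat)) ` univ M"
      then obtain a where p: "p = (a, 0)" "a \<in> univ M" by blast
      then have "a \<in> Q0 M \<or> a \<in> Q1 M \<or> a \<in> Q2 M" using T(2) by blast
      then show "p \<in> univ N" using p(1) unfolding N_def QA_def QB_def QC_def by auto
    qed
    show "\<forall>x\<in>univ M. (x \<in> Q0 M \<longleftrightarrow> (x, 0::nat) \<in> Q0 N) \<and> (x \<in> Q1 M \<longleftrightarrow> (x, 0::nat) \<in> Q1 N)
                  \<and> (x \<in> Q2 M \<longleftrightarrow> (x, 0::nat) \<in> Q2 N)"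
      unfolding N_def QA_def QB_def QC_def by simp
    show "\<forall>x y. F0 M x = Some y \<longrightarrow> F0 N (x, 0::nat) = Some (y, 0)"
      unfolding N_def g0_def by simp
    show "\<forall>z x y. F1 M z x = Some y \<longrightarrow> F1 N (z, 0::nat) (x, 0) = Some (y, 0)"
    proof (intro allI impI)
      fix z x y assume a: "F1 M z x = Some y"
      then show "F1 N (z, 0::nat) (x, 0) = Some (y, 0)"
        using t1[OF a] unfolding N_def g1_def QA_def QC_def by simp
    qed
    show "\<forall>x y. F2 M x = Some y \<longrightarrow> F2 N (x, 0::nat) = Some (y, 0)"
    proof (intro allI impI)
      fix x y assume a: "F2 M x = Some y"
      then show "F2 N (x, 0::nat) = Some (y, 0)"
        using t2[OF a] unfolding N_def g2_def by simp
    qed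
    show "\<forall>x y. F3 M x = Some y \<longrightarrow> F3 N (x, 0::nat) = Some (y, 0)"
      unfolding N_def g3_def by simp
  qed
  ultimately show ?thesis by blast
qed



definition mk :: "('x \<Rightarrow> bool) \<Rightarrow> 'x option" where
  "mk P = (if \<exists>v. P v then Some (SOME v. P v) else None)"

lemma mk_Some:
  assumes "\<And>v v'. P v \<Longrightarrow> P v' \<Longrightarrow> v = v'"
  shows "mk P = Some v \<longleftrightarrow> P v"
proof
  assume "mk P = Some v"
  then have ex: "\<exists>v. P v" by (cases "\<exists>v. P v") (simp_all add: mk_def)
  then have "v = (SOME v. P v)" using \<open>mk P = Some v\<close> by (simp add: mk_def)
  then show "P v" using ex by (metis someI_ex)
next
  assume "P v"
  then have "P (SOME v. P v)" by (metis someI_ex)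
  then show "mk P = Some v" using assms \<open>P v\<close> unfolding mk_def by auto
qed

definition U :: "('b \<Rightarrow> 'd) \<Rightarrow> 'b str \<Rightarrow> ('c \<Rightarrow> 'd) \<Rightarrow> 'c str \<Rightarrow> 'd str" where
  "U h1 M1 h2 M2 = \<lparr>univ = h1 ` univ M1 \<union> h2 ` univ M2,
     Q0 = h1 ` Q0 M1 \<union> h2 ` Q0 M2, Q1 = h1 ` Q1 M1 \<union> h2 ` Q1 M2, Q2 = h1 ` Q2 M1 \<union> h2 ` Q2 M2,
     F0 = (\<lambda>u. mk (\<lambda>v. (\<exists>a b. F0 M1 a = Some b \<and> u = h1 a \<and> v = h1 b) \<or> (\<exists>a b. F0 M2 a = Some b \<and> u = h2 a \<and> v = h2 b))),
     F1 = (\<lambda>u w. mk (\<lambda>v. (\<exists>z x b. F1 M1 z x = Some b \<and> u = h1 z \<and> w = h1 x \<and> v = h1 b)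
                      \<or> (\<exists>z x b. F1 M2 z x = Some b \<and> u = h2 z \<and> w = h2 x \<and> v = h2 b))),
     F2 = (\<lambda>u. mk (\<lambda>v. (\<exists>a b. F2 M1 a = Some b \<and> u = h1 a \<and> v = h1 b) \<or> (\<exists>a b. F2 M2 a = Some b \<and> u = h2 a \<and> v = h2 b))),
     F3 = (\<lambda>u. mk (\<lambda>v. (\<exists>a b. F3 M1 a = Some b \<and> u = h1 a \<and> v = h1 b) \<or> (\<exists>a b. F3 M2 a = Some b \<and> u = h2 a \<and> v = h2 b)))\<rparr>"

lemma unary_unique:
  assumes i1: "inj_on h1 A1" and i2: "inj_on h2 A2"
    and d1: "\<And>a b. f1 a = Some b \<Longrightarrow> a \<in> A1"
    and d2: "\<And>a b. f2 a = Some b \<Longrightarrow> a \<in> A2"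
    and C: "\<And>a b a' b'. f1 a = Some a' \<Longrightarrow> f2 b = Some b' \<Longrightarrow> h1 a = h2 b \<Longrightarrow> h1 a' = h2 b'"
    and P: "P = (\<lambda>v. (\<exists>a b. f1 a = Some b \<and> u = h1 a \<and> v = h1 b) \<or> (\<exists>a b. f2 a = Some b \<and> u = h2 a \<and> v = h2 b))"
  shows "P v \<Longrightarrow> P v' \<Longrightarrow> v = v'"
proof -
  assume "P v" "P v'"
  then show "v = v'" unfolding P
  proof (elim disjE exE conjE)
    fix a b a' b' assume a: "f1 a = Some b" "u = h1 a" "v = h1 b" "f1 a' = Some b'" "u = h1 a'" "v' = h1 b'"
    have "a = a'" using i1 d1[OF a(1)] d1[OF a(4)] a(2,5) by (simp add: inj_on_eq_iff)
    then show "v = v'" using a by simp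
  next
    fix a b a' b' assume a: "f1 a = Some b" "u = h1 a" "v = h1 b" "f2 a' = Some b'" "u = h2 a'" "v' = h2 b'"
    have "h1 b = h2 b'" using C[OF a(1) a(4)] a(2,5) by simp
    then show "v = v'" using a by simp
  next
    fix a b a' b' assume a: "f2 a = Some b" "u = h2 a" "v = h2 b" "f1 a' = Some b'" "u = h1 a'" "v' = h1 b'"
    have "h1 b' = h2 b" using C[OF a(4) a(1)] a(2,5) by simp
    then show "v = v'" using a by simp
  next
    fix a b a' b' assume a: "f2 a = Some b" "u = h2 a" "v = h2 b" "f2 a' = Some b'" "u = h2 a'" "v' = h2 b'"
    have "a = a'" using i2 d2[OF a(1)] d2[OF a(4)] a(2,5) by (simp add: inj_on_eq_iff)
    then show "v = v'" using a by simp
  qed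
qed

lemma binary_unique:
  assumes i1: "inj_on h1 A1" and i2: "inj_on h2 A2"
    and d1: "\<And>z x b. f1 z x = Some b \<Longrightarrow> z \<in> A1 \<and> x \<in> A1"
    and d2: "\<And>z x b. f2 z x = Some b \<Longrightarrow> z \<in> A2 \<and> x \<in> A2"
    and C: "\<And>z x z' x' y y'. f1 z x = Some y \<Longrightarrow> f2 z' x' = Some y' \<Longrightarrow> h1 z = h2 z' \<Longrightarrow> h1 x = h2 x' \<Longrightarrow> h1 y = h2 y'"
    and P: "P = (\<lambda>v. (\<exists>z x b. f1 z x = Some b \<and> u = h1 z \<and> w = h1 x \<and> v = h1 b)
                      \<or> (\<exists>z x b. f2 z x = Some b \<and> u = h2 z \<and> w = h2 x \<and> v = h2 b))"
  shows "P v \<Longrightarrow> P v' \<Longrightarrow> v = v'"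
proof -
  assume "P v" "P v'"
  then show "v = v'" unfolding P
  proof (elim disjE exE conjE)
    fix z x b z' x' b' assume a: "f1 z x = Some b" "u = h1 z" "w = h1 x" "v = h1 b" "f1 z' x' = Some b'" "u = h1 z'" "w = h1 x'" "v' = h1 b'"
    have "z = z'" "x = x'" using i1 d1[OF a(1)] d1[OF a(5)] a(2,3,6,7) by (simp_all add: inj_on_eq_iff)
    then show "v = v'" using a by simp
  next
    fix z x b z' x' b' assume a: "f1 z x = Some b" "u = h1 z" "w = h1 x" "v = h1 b" "f2 z' x' = Some b'" "u = h2 z'" "w = h2 x'" "v' = h2 b'"
    have "h1 b = h2 b'" using C[OF a(1) a(5)] a(2,3,6,7) by simp
    then show "v = v'" using a by simp
  next
    fix z x b z' x' b' assume a: "f2 z x = Some b" "u = h2 z" "w = h2 x" "v = h2 b" "f1 z' x' = Some b'" "u = h1 z'" "w = h1 x'" "v' = h1 b'"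
    have "h1 b' = h2 b" using C[OF a(5) a(1)] a(2,3,6,7) by simp
    then show "v = v'" using a by simp
  next
    fix z x b z' x' b' assume a: "f2 z x = Some b" "u = h2 z" "w = h2 x" "v = h2 b" "f2 z' x' = Some b'" "u = h2 z'" "w = h2 x'" "v' = h2 b'"
    have "z = z'" "x = x'" using i2 d2[OF a(1)] d2[OF a(5)] a(2,3,6,7) by (simp_all add: inj_on_eq_iff)
    then show "v = v'" using a by simp
  qed
qed




lemma T0_dom:
  assumes "T0 M"
  shows "F0 M a = Some b \<Longrightarrow> a \<in> univ M \<and> b \<in> univ M"
    "F1 M z x = Some b \<Longrightarrow> z \<in> univ M \<and> x \<in> univ M \<and> b \<in> univ M"
    "F2 M a = Some b \<Longrightarrow> a \<in> univ M \<and> b \<in> univ M"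
    "F3 M a = Some b \<Longrightarrow> a \<in> univ M \<and> b \<in> univ M"
proof -
  note t = T0D(6-9)[OF assms] and s = T0_sub[OF assms]
  show "F0 M a = Some b \<Longrightarrow> a \<in> univ M \<and> b \<in> univ M"
  proof -
    assume h: "F0 M a = Some b"
    have "a \<in> Q1 M \<and> b \<in> Q0 M" using t(1) h by simp
    then show ?thesis using s(1,2) by (simp add: subsetD)
  qed
  show "F1 M z x = Some b \<Longrightarrow> z \<in> univ M \<and> x \<in> univ M \<and> b \<in> univ M"
  proof -
    assume h: "F1 M z x = Some b"
    have "z \<in> Q2 M \<and> x \<in> Q0 M \<and> b \<in> Q1 M" using t(2) h by simp
    then show ?thesis using s by (simp add: subsetD)
  qed
  show "F2 M a = Some b \<Longrightarrow> a \<in> univ M \<and> b \<in> univ M"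
  proof -
    assume h: "F2 M a = Some b"
    have "a \<in> Q0 M \<and> b \<in> Q2 M" using t(3) h by simp
    then show ?thesis using s by (simp add: subsetD)
  qed
  show "F3 M a = Some b \<Longrightarrow> a \<in> univ M \<and> b \<in> univ M"
  proof -
    assume h: "F3 M a = Some b"
    have "a \<in> Q2 M \<and> b \<in> Q0 M" using t(4) h by simp
    then show ?thesis using s by (simp add: subsetD)
  qed
qed

lemma img_disj:
  assumes i1: "inj_on h1 U1" and i2: "inj_on h2 U2" and s: "A1 \<subseteq> U1" "B1 \<subseteq> U1" "A2 \<subseteq> U2" "B2 \<subseteq> U2"
    and d: "A1 \<inter> B1 = {}" "A2 \<inter> B2 = {}"
    and cA: "\<And>a b. a \<in> U1 \<Longrightarrow> b \<in> U2 \<Longrightarrow> h1 a = h2 b \<Longrightarrow> (a \<in> A1 \<longleftrightarrow> b \<in> A2)"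
    and cB: "\<And>a b. a \<in> U1 \<Longrightarrow> b \<in> U2 \<Longrightarrow> h1 a = h2 b \<Longrightarrow> (a \<in> B1 \<longleftrightarrow> b \<in> B2)"
  shows "(h1 ` A1 \<union> h2 ` A2) \<inter> (h1 ` B1 \<union> h2 ` B2) = {}"
proof (rule ccontr)
  assume "(h1 ` A1 \<union> h2 ` A2) \<inter> (h1 ` B1 \<union> h2 ` B2) \<noteq> {}"
  then obtain u where u: "u \<in> h1 ` A1 \<union> h2 ` A2" "u \<in> h1 ` B1 \<union> h2 ` B2" by blast
  from u(1) show False
  proof
    assume "u \<in> h1 ` A1"
    then obtain a where a: "a \<in> A1" "u = h1 a" by blast
    have aU: "a \<in> U1" using a(1) s(1) by (rule subsetD[rotated])
    from u(2) show False
    proof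
      assume "u \<in> h1 ` B1"
      then obtain b where b: "b \<in> B1" "u = h1 b" by blast
      have bU: "b \<in> U1" using b(1) s(2) by (rule subsetD[rotated])
      have "a = b" using inj_onD[OF i1 _ aU bU] a(2) b(2) by simp
      then show False using a(1) b(1) d(1) by blast
    next
      assume "u \<in> h2 ` B2"
      then obtain b where b: "b \<in> B2" "u = h2 b" by blast
      have bU: "b \<in> U2" using b(1) s(4) by (rule subsetD[rotated])
      have "a \<in> B1" using cB[OF aU bU] a(2) b by simp
      then show False using a(1) d(1) by blast
    qed
  next
    assume "u \<in> h2 ` A2"
    then obtain a where a: "a \<in> A2" "u = h2 a" by blast
    have aU: "a \<in> U2" using a(1) s(3) by (rule subsetD[rotated])
    from u(2) show False
    proof
      assume "u \<in> h1 ` B1"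
      then obtain b where b: "b \<in> B1" "u = h1 b" by blast
      have bU: "b \<in> U1" using b(1) s(2) by (rule subsetD[rotated])
      have "b \<in> A1" using cA[OF bU aU] a b(2) by simp
      then show False using b(1) d(1) by blast
    next
      assume "u \<in> h2 ` B2"
      then obtain b where b: "b \<in> B2" "u = h2 b" by blast
      have bU: "b \<in> U2" using b(1) s(4) by (rule subsetD[rotated])
      have "a = b" using inj_onD[OF i2 _ aU bU] a(2) b(2) by simp
      then show False using a(1) b(1) d(2) by blast
    qed
  qed
qed

lemma img_mem1:
  assumes i1: "inj_on h1 U1" and s: "A1 \<subseteq> U1" "A2 \<subseteq> U2" and x: "x \<in> U1"
    and c: "\<And>a b. a \<in> U1 \<Longrightarrow> b \<in> U2 \<Longrightarrow> h1 a = h2 b \<Longrightarrow> (a \<in> A1 \<longleftrightarrow> b \<in> A2)"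
  shows "x \<in> A1 \<longleftrightarrow> h1 x \<in> h1 ` A1 \<union> h2 ` A2"
proof
  assume "h1 x \<in> h1 ` A1 \<union> h2 ` A2"
  then show "x \<in> A1"
  proof
    assume "h1 x \<in> h1 ` A1"
    then obtain a where a: "a \<in> A1" "h1 x = h1 a" by blast
    have aU: "a \<in> U1" using a(1) s(1) by (rule subsetD[rotated])
    have "x = a" using inj_onD[OF i1 a(2) x aU] .
    then show "x \<in> A1" using a(1) by simp
  next
    assume "h1 x \<in> h2 ` A2"
    then obtain b where b: "b \<in> A2" "h1 x = h2 b" by blast
    have bU: "b \<in> U2" using b(1) s(2) by (rule subsetD[rotated])
    show "x \<in> A1" using c[OF x bU b(2)] b(1) by simp
  qed
next
  assume "x \<in> A1"
  then show "h1 x \<in> h1 ` A1 \<union> h2 ` A2" by simp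
qed

lemma img_mem2:
  assumes i2: "inj_on h2 U2" and s: "A1 \<subseteq> U1" "A2 \<subseteq> U2" and x: "x \<in> U2"
    and c: "\<And>a b. a \<in> U1 \<Longrightarrow> b \<in> U2 \<Longrightarrow> h1 a = h2 b \<Longrightarrow> (a \<in> A1 \<longleftrightarrow> b \<in> A2)"
  shows "x \<in> A2 \<longleftrightarrow> h2 x \<in> h1 ` A1 \<union> h2 ` A2"
proof
  assume "h2 x \<in> h1 ` A1 \<union> h2 ` A2"
  then show "x \<in> A2"
  proof
    assume "h2 x \<in> h2 ` A2"
    then obtain a where a: "a \<in> A2" "h2 x = h2 a" by blast
    have aU: "a \<in> U2" using a(1) s(2) by (rule subsetD[rotated])
    have "x = a" using inj_onD[OF i2 a(2) x aU] .
    then show "x \<in> A2" using a(1) by simp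
  next
    assume "h2 x \<in> h1 ` A1"
    then obtain b where b: "b \<in> A1" "h2 x = h1 b" by blast
    have bU: "b \<in> U1" using b(1) s(1) by (rule subsetD[rotated])
    show "x \<in> A2" using c[OF bU x] b by simp
  qed
next
  assume "x \<in> A2"
  then show "h2 x \<in> h1 ` A1 \<union> h2 ` A2" by simp
qed


lemma emb_comp:
  assumes h: "embedding h M N" and k: "embedding k N P"
  shows "embedding (k \<circ> h) M P"
  unfolding embedding_def
proof (intro conjI)
  have ih: "inj_on h (univ M)" "h ` univ M \<subseteq> univ N" using h unfolding embedding_def by simp_all
  have ik: "inj_on k (univ N)" "k ` univ N \<subseteq> univ P" using k unfolding embedding_def by simp_all
  show "inj_on (k \<circ> h) (univ M)" using ih ik by (meson comp_inj_on inj_on_subset)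
  show "(k \<circ> h) ` univ M \<subseteq> univ P" using ih ik by (auto simp: image_comp[symmetric])
  have qh: "\<forall>x\<in>univ M. (x \<in> Q0 M \<longleftrightarrow> h x \<in> Q0 N) \<and> (x \<in> Q1 M \<longleftrightarrow> h x \<in> Q1 N) \<and> (x \<in> Q2 M \<longleftrightarrow> h x \<in> Q2 N)"
    using h unfolding embedding_def by simp
  have qk: "\<forall>x\<in>univ N. (x \<in> Q0 N \<longleftrightarrow> k x \<in> Q0 P) \<and> (x \<in> Q1 N \<longleftrightarrow> k x \<in> Q1 P) \<and> (x \<in> Q2 N \<longleftrightarrow> k x \<in> Q2 P)"
    using k unfolding embedding_def by simp
  show "\<forall>x\<in>univ M. (x \<in> Q0 M \<longleftrightarrow> (k \<circ> h) x \<in> Q0 P) \<and> (x \<in> Q1 M \<longleftrightarrow> (k \<circ> h) x \<in> Q1 P) \<and> (x \<in> Q2 M \<longleftrightarrow> (k \<circ> h) x \<in> Q2 P)"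
  proof
    fix x assume x: "x \<in> univ M"
    then have "h x \<in> univ N" using ih by blast
    then show "(x \<in> Q0 M \<longleftrightarrow> (k \<circ> h) x \<in> Q0 P) \<and> (x \<in> Q1 M \<longleftrightarrow> (k \<circ> h) x \<in> Q1 P) \<and> (x \<in> Q2 M \<longleftrightarrow> (k \<circ> h) x \<in> Q2 P)"
      using qh qk x by simp
  qed
  show "\<forall>x y. F0 M x = Some y \<longrightarrow> F0 P ((k \<circ> h) x) = Some ((k \<circ> h) y)"
    using h k unfolding embedding_def by simp
  show "\<forall>z x y. F1 M z x = Some y \<longrightarrow> F1 P ((k \<circ> h) z) ((k \<circ> h) x) = Some ((k \<circ> h) y)"
    using h k unfolding embedding_def by simp
  show "\<forall>x y. F2 M x = Some y \<longrightarrow> F2 P ((k \<circ> h) x) = Some ((k \<circ> h) y)"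
    using h k unfolding embedding_def by simp
  show "\<forall>x y. F3 M x = Some y \<longrightarrow> F3 P ((k \<circ> h) x) = Some ((k \<circ> h) y)"
    using h k unfolding embedding_def by simp
qed



lemma embD:
  assumes "embedding h M N"
  shows "inj_on h (univ M)" "h ` univ M \<subseteq> univ N"
    "x \<in> univ M \<Longrightarrow> x \<in> Q0 M \<longleftrightarrow> h x \<in> Q0 N"
    "x \<in> univ M \<Longrightarrow> x \<in> Q1 M \<longleftrightarrow> h x \<in> Q1 N"
    "x \<in> univ M \<Longrightarrow> x \<in> Q2 M \<longleftrightarrow> h x \<in> Q2 N"
    "F0 M x = Some y \<Longrightarrow> F0 N (h x) = Some (h y)"
    "F1 M z x = Some y \<Longrightarrow> F1 N (h z) (h x) = Some (h y)"
    "F2 M x = Some y \<Longrightarrow> F2 N (h x) = Some (h y)"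
    "F3 M x = Some y \<Longrightarrow> F3 N (h x) = Some (h y)"
  using assms unfolding embedding_def by simp_all

lemma U_ok:
  assumes T1: "T0 M1" and T2: "T0 M2" and i1: "inj_on h1 (univ M1)" and i2: "inj_on h2 (univ M2)"
    and c0: "\<And>a b. a \<in> univ M1 \<Longrightarrow> b \<in> univ M2 \<Longrightarrow> h1 a = h2 b \<Longrightarrow> (a \<in> Q0 M1 \<longleftrightarrow> b \<in> Q0 M2)"
    and c1: "\<And>a b. a \<in> univ M1 \<Longrightarrow> b \<in> univ M2 \<Longrightarrow> h1 a = h2 b \<Longrightarrow> (a \<in> Q1 M1 \<longleftrightarrow> b \<in> Q1 M2)"
    and c2: "\<And>a b. a \<in> univ M1 \<Longrightarrow> b \<in> univ M2 \<Longrightarrow> h1 a = h2 b \<Longrightarrow> (a \<in> Q2 M1 \<longleftrightarrow> b \<in> Q2 M2)"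
    and C0: "\<And>a b a' b'. F0 M1 a = Some a' \<Longrightarrow> F0 M2 b = Some b' \<Longrightarrow> h1 a = h2 b \<Longrightarrow> h1 a' = h2 b'"
    and C1: "\<And>z x z' x' y y'. F1 M1 z x = Some y \<Longrightarrow> F1 M2 z' x' = Some y' \<Longrightarrow> h1 z = h2 z' \<Longrightarrow> h1 x = h2 x' \<Longrightarrow> h1 y = h2 y'"
    and C2: "\<And>a b a' b'. F2 M1 a = Some a' \<Longrightarrow> F2 M2 b = Some b' \<Longrightarrow> h1 a = h2 b \<Longrightarrow> h1 a' = h2 b'"
    and C3: "\<And>a b a' b'. F3 M1 a = Some a' \<Longrightarrow> F3 M2 b = Some b' \<Longrightarrow> h1 a = h2 b \<Longrightarrow> h1 a' = h2 b'"
  shows "T0 (U h1 M1 h2 M2) \<and> embedding h1 M1 (U h1 M1 h2 M2) \<and> embedding h2 M2 (U h1 M1 h2 M2)"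
proof -
  define G where "G = U h1 M1 h2 M2"
  have d01: "\<And>a b. F0 M1 a = Some b \<Longrightarrow> a \<in> univ M1" using T0_dom(1)[OF T1] by blast
  have d02: "\<And>a b. F0 M2 a = Some b \<Longrightarrow> a \<in> univ M2" using T0_dom(1)[OF T2] by blast
  have d11: "\<And>z x b. F1 M1 z x = Some b \<Longrightarrow> z \<in> univ M1 \<and> x \<in> univ M1" using T0_dom(2)[OF T1] by blast
  have d12: "\<And>z x b. F1 M2 z x = Some b \<Longrightarrow> z \<in> univ M2 \<and> x \<in> univ M2" using T0_dom(2)[OF T2] by blast
  have d21: "\<And>a b. F2 M1 a = Some b \<Longrightarrow> a \<in> univ M1" using T0_dom(3)[OF T1] by blast
  have d22: "\<And>a b. F2 M2 a = Some b \<Longrightarrow> a \<in> univ M2" using T0_dom(3)[OF T2] by blast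
  have d31: "\<And>a b. F3 M1 a = Some b \<Longrightarrow> a \<in> univ M1" using T0_dom(4)[OF T1] by blast
  have d32: "\<And>a b. F3 M2 a = Some b \<Longrightarrow> a \<in> univ M2" using T0_dom(4)[OF T2] by blast
  have e0: "F0 G u = Some v \<longleftrightarrow> ((\<exists>a b. F0 M1 a = Some b \<and> u = h1 a \<and> v = h1 b) \<or> (\<exists>a b. F0 M2 a = Some b \<and> u = h2 a \<and> v = h2 b))" for u v
    unfolding G_def U_def str.select_convs
    by (rule mk_Some[OF unary_unique[OF i1 i2 d01 d02 C0 refl]])
  have e1: "F1 G u w = Some v \<longleftrightarrow> ((\<exists>z x b. F1 M1 z x = Some b \<and> u = h1 z \<and> w = h1 x \<and> v = h1 b)
                      \<or> (\<exists>z x b. F1 M2 z x = Some b \<and> u = h2 z \<and> w = h2 x \<and> v = h2 b))" for u w v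
    unfolding G_def U_def str.select_convs
    by (rule mk_Some[OF binary_unique[OF i1 i2 d11 d12 C1 refl]])
  have e2: "F2 G u = Some v \<longleftrightarrow> ((\<exists>a b. F2 M1 a = Some b \<and> u = h1 a \<and> v = h1 b) \<or> (\<exists>a b. F2 M2 a = Some b \<and> u = h2 a \<and> v = h2 b))" for u v
    unfolding G_def U_def str.select_convs
    by (rule mk_Some[OF unary_unique[OF i1 i2 d21 d22 C2 refl]])
  have e3: "F3 G u = Some v \<longleftrightarrow> ((\<exists>a b. F3 M1 a = Some b \<and> u = h1 a \<and> v = h1 b) \<or> (\<exists>a b. F3 M2 a = Some b \<and> u = h2 a \<and> v = h2 b))" for u v
    unfolding G_def U_def str.select_convs
    by (rule mk_Some[OF unary_unique[OF i1 i2 d31 d32 C3 refl]])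
  have q: "univ G = h1 ` univ M1 \<union> h2 ` univ M2" "Q0 G = h1 ` Q0 M1 \<union> h2 ` Q0 M2"
    "Q1 G = h1 ` Q1 M1 \<union> h2 ` Q1 M2" "Q2 G = h1 ` Q2 M1 \<union> h2 ` Q2 M2"
    unfolding G_def U_def by simp_all
  note s1 = T0_sub[OF T1] and s2 = T0_sub[OF T2]
  note t1 = T0D[OF T1] and t2 = T0D[OF T2]
  have "T0 G"
  proof (rule T0I)
    show "univ G \<noteq> {}" using t1(1) q(1) by simp
    show "Q0 G \<union> Q1 G \<union> Q2 G = univ G"
      unfolding q t1(2)[symmetric] t2(2)[symmetric] image_Un by blast
    show "Q0 G \<inter> Q1 G = {}" unfolding q by (rule img_disj[OF i1 i2 s1(1) s1(2) s2(1) s2(2) t1(3) t2(3) c0 c1])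
    show "Q0 G \<inter> Q2 G = {}" unfolding q by (rule img_disj[OF i1 i2 s1(1) s1(3) s2(1) s2(3) t1(4) t2(4) c0 c2])
    show "Q1 G \<inter> Q2 G = {}" unfolding q by (rule img_disj[OF i1 i2 s1(2) s1(3) s2(2) s2(3) t1(5) t2(5) c1 c2])
    show "\<forall>x y. F0 G x = Some y \<longrightarrow> x \<in> Q1 G \<and> y \<in> Q0 G"
    proof (intro allI impI)
      fix u v assume "F0 G u = Some v"
      then show "u \<in> Q1 G \<and> v \<in> Q0 G" unfolding e0 q using t1(6) t2(6) by blast
    qed
    show "\<forall>z x y. F1 G z x = Some y \<longrightarrow> z \<in> Q2 G \<and> x \<in> Q0 G \<and> y \<in> Q1 G"
    proof (intro allI impI)
      fix u w v assume "F1 G u w = Some v"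
      then show "u \<in> Q2 G \<and> w \<in> Q0 G \<and> v \<in> Q1 G" unfolding e1 q using t1(7) t2(7) by blast
    qed
    show "\<forall>x y. F2 G x = Some y \<longrightarrow> x \<in> Q0 G \<and> y \<in> Q2 G"
    proof (intro allI impI)
      fix u v assume "F2 G u = Some v"
      then show "u \<in> Q0 G \<and> v \<in> Q2 G" unfolding e2 q using t1(8) t2(8) by blast
    qed
    show "\<forall>x y. F3 G x = Some y \<longrightarrow> x \<in> Q2 G \<and> y \<in> Q0 G"
    proof (intro allI impI)
      fix u v assume "F3 G u = Some v"
      then show "u \<in> Q2 G \<and> v \<in> Q0 G" unfolding e3 q using t1(9) t2(9) by blast
    qed
    show "\<forall>z x y. F1 G z x = Some y \<longrightarrow> F0 G y = Some x"
    proof (intro allI impI)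
      fix u w v assume "F1 G u w = Some v"
      then show "F0 G v = Some w" unfolding e1 e0 using t1(10) t2(10) by blast
    qed
    show "\<forall>x z. F2 G x = Some z \<longrightarrow> F3 G z = Some x"
    proof (intro allI impI)
      fix u v assume "F2 G u = Some v"
      then show "F3 G v = Some u" unfolding e2 e3 using t1(11) t2(11) by blast
    qed
  qed
  moreover have "embedding h1 M1 G"
    unfolding embedding_def
  proof (intro conjI ballI allI impI)
    show "inj_on h1 (univ M1)" by (rule i1)
    show "h1 ` univ M1 \<subseteq> univ G" unfolding q by blast
    fix x assume x: "x \<in> univ M1"
    show "x \<in> Q0 M1 \<longleftrightarrow> h1 x \<in> Q0 G" unfolding q by (rule img_mem1[OF i1 s1(1) s2(1) x c0])
    show "x \<in> Q1 M1 \<longleftrightarrow> h1 x \<in> Q1 G" unfolding q by (rule img_mem1[OF i1 s1(2) s2(2) x c1])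
    show "x \<in> Q2 M1 \<longleftrightarrow> h1 x \<in> Q2 G" unfolding q by (rule img_mem1[OF i1 s1(3) s2(3) x c2])
  next
    fix x y assume "F0 M1 x = Some y" then show "F0 G (h1 x) = Some (h1 y)" unfolding e0 by blast
  next
    fix z x y assume "F1 M1 z x = Some y" then show "F1 G (h1 z) (h1 x) = Some (h1 y)" unfolding e1 by blast
  next
    fix x y assume "F2 M1 x = Some y" then show "F2 G (h1 x) = Some (h1 y)" unfolding e2 by blast
  next
    fix x y assume "F3 M1 x = Some y" then show "F3 G (h1 x) = Some (h1 y)" unfolding e3 by blast
  qed
  moreover have "embedding h2 M2 G"
    unfolding embedding_def
  proof (intro conjI ballI allI impI)
    show "inj_on h2 (univ M2)" by (rule i2)
    show "h2 ` univ M2 \<subseteq> univ G" unfolding q by blast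
    fix x assume x: "x \<in> univ M2"
    show "x \<in> Q0 M2 \<longleftrightarrow> h2 x \<in> Q0 G" unfolding q by (rule img_mem2[OF i2 s1(1) s2(1) x c0])
    show "x \<in> Q1 M2 \<longleftrightarrow> h2 x \<in> Q1 G" unfolding q by (rule img_mem2[OF i2 s1(2) s2(2) x c1])
    show "x \<in> Q2 M2 \<longleftrightarrow> h2 x \<in> Q2 G" unfolding q by (rule img_mem2[OF i2 s1(3) s2(3) x c2])
  next
    fix x y assume "F0 M2 x = Some y" then show "F0 G (h2 x) = Some (h2 y)" unfolding e0 by blast
  next
    fix z x y assume "F1 M2 z x = Some y" then show "F1 G (h2 z) (h2 x) = Some (h2 y)" unfolding e1 by blast
  next
    fix x y assume "F2 M2 x = Some y" then show "F2 G (h2 x) = Some (h2 y)" unfolding e2 by blast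
  next
    fix x y assume "F3 M2 x = Some y" then show "F3 G (h2 x) = Some (h2 y)" unfolding e3 by blast
  qed
  ultimately show ?thesis unfolding G_def by blast
qed



lemma JEP:
  fixes M1 :: "'b str" and M2 :: "'c str"
  assumes "T0plus M1" "T0plus M2"
  shows "\<exists>(N :: (('b + 'c) \<times> nat) str) g1 g2. T0plus N \<and> embedding g1 M1 N \<and> embedding g2 M2 N"
proof -
  have T1: "T0 M1" and T2: "T0 M2" using assms T0plusD(1) by blast+
  have G: "T0 (U Inl M1 Inr M2) \<and> embedding Inl M1 (U Inl M1 Inr M2) \<and> embedding Inr M2 (U Inl M1 Inr M2)"
    by (rule U_ok[OF T1 T2]) (simp_all add: inj_on_def)
  then obtain N :: "(('b + 'c) \<times> nat) str" and h where N: "T0plus N" "embedding h (U Inl M1 Inr M2) N"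
    using part4 by blast
  have g1: "embedding Inl M1 (U Inl M1 Inr M2)" and g2: "embedding Inr M2 (U Inl M1 Inr M2)" using G by simp_all
  show ?thesis using N(1) emb_comp[OF g1 N(2)] emb_comp[OF g2 N(2)] by blast
qed

lemma AP:
  fixes M0 :: "'a str" and M1 :: "'b str" and M2 :: "'c str"
  assumes P0: "T0plus M0" and P1: "T0plus M1" and P2: "T0plus M2"
    and E1: "embedding f1 M0 M1" and E2: "embedding f2 M0 M2"
  shows "\<exists>(N :: (('b + 'c) \<times> nat) str) g1 g2. T0plus N \<and> embedding g1 M1 N \<and> embedding g2 M2 N \<and>
           (\<forall>x\<in>univ M0. g1 (f1 x) = g2 (f2 x))"
proof -
  have T0: "T0 M0" and T1: "T0 M1" and T2: "T0 M2" using P0 P1 P2 T0plusD(1) by blast+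
  note e1 = embD[OF E1] and e2 = embD[OF E2]
  define gl :: "'c \<Rightarrow> 'b + 'c" where
    "gl y = (if \<exists>x\<in>univ M0. y = f2 x then Inl (f1 (SOME x. x \<in> univ M0 \<and> y = f2 x)) else Inr y)" for y
  have gl_f2: "gl (f2 x) = Inl (f1 x)" if x: "x \<in> univ M0" for x
  proof -
    define s where "s = (SOME x'. x' \<in> univ M0 \<and> f2 x = f2 x')"
    have "s \<in> univ M0 \<and> f2 x = f2 s" unfolding s_def by (rule someI[of _ x]) (simp add: x)
    then have "s = x" using inj_onD[OF e2(1)] x by metis
    moreover have "\<exists>x'\<in>univ M0. f2 x = f2 x'" using x by blast
    ultimately show ?thesis unfolding gl_def s_def by simp
  qed
  have gl_Inl: "\<exists>x\<in>univ M0. y = f2 x \<and> a = f1 x" if "gl y = Inl a" for y a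
  proof -
    have ex: "\<exists>x\<in>univ M0. y = f2 x"
    proof (rule ccontr)
      assume "\<not> (\<exists>x\<in>univ M0. y = f2 x)"
      then have "gl y = Inr y" unfolding gl_def by simp
      then show False using that by simp
    qed
    then obtain x where x: "x \<in> univ M0" "y = f2 x" by blast
    then have "gl y = Inl (f1 x)" using gl_f2 by simp
    then have "a = f1 x" using that by simp
    then show ?thesis using x by blast
  qed
  have gl_Inr: "gl y = Inr y" if "\<not> (\<exists>x\<in>univ M0. y = f2 x)" for y
    using that unfolding gl_def by simp
  have igl: "inj_on gl (univ M2)"
  proof (rule inj_onI)
    fix y y' assume yy: "gl y = gl y'"
    show "y = y'"
    proof (cases "\<exists>x\<in>univ M0. y = f2 x")
      case True
      then obtain x where x: "x \<in> univ M0" "y = f2 x" by blast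
      then have "gl y' = Inl (f1 x)" using gl_f2 yy by simp
      then obtain x' where x': "x' \<in> univ M0" "y' = f2 x'" "f1 x = f1 x'" using gl_Inl by blast
      then have "x = x'" using inj_onD[OF e1(1)] x(1) by metis
      then show ?thesis using x x' by simp
    next
      case False
      then have g: "gl y = Inr y" by (rule gl_Inr)
      show ?thesis
      proof (cases "\<exists>x\<in>univ M0. y' = f2 x")
        case True
        then obtain x where x: "x \<in> univ M0" "y' = f2 x" by blast
        then have "gl y' = Inl (f1 x)" using gl_f2 by simp
        then show ?thesis using g yy by simp
      next
        case False
        then show ?thesis using g yy gl_Inr by simp
      qed
    qed
  qed
  have i1: "inj_on Inl (univ M1)" by (simp add: inj_on_def)
  have cq: "\<exists>x\<in>univ M0. b = f2 x \<and> a = f1 x" if "Inl a = gl b" for a b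
    using gl_Inl that by metis
  have c0: "a \<in> Q0 M1 \<longleftrightarrow> b \<in> Q0 M2" if "a \<in> univ M1" "b \<in> univ M2" "Inl a = gl b" for a b
    using cq[OF that(3)] e1(3) e2(3) by metis
  have c1: "a \<in> Q1 M1 \<longleftrightarrow> b \<in> Q1 M2" if "a \<in> univ M1" "b \<in> univ M2" "Inl a = gl b" for a b
    using cq[OF that(3)] e1(4) e2(4) by metis
  have c2: "a \<in> Q2 M1 \<longleftrightarrow> b \<in> Q2 M2" if "a \<in> univ M1" "b \<in> univ M2" "Inl a = gl b" for a b
    using cq[OF that(3)] e1(5) e2(5) by metis
  note t0 = T0D[OF T0] and t1 = T0D[OF T1] and d0 = T0_dom[OF T0]
  have C0: "Inl a' = gl b'" if h: "F0 M1 a = Some a'" "F0 M2 b = Some b'" "Inl a = gl b" for a b a' b'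
  proof -
    obtain x where x: "x \<in> univ M0" "b = f2 x" "a = f1 x" using cq[OF h(3)] by blast
    have "f1 x \<in> Q1 M1" using t1(6) h(1) x(3) by blast
    then have "x \<in> Q1 M0" using e1(4)[OF x(1)] by simp
    then obtain y where y: "F0 M0 x = Some y" using T0plusD(2)[OF P0] by blast
    have yU: "y \<in> univ M0" using d0(1)[OF y] by simp
    have "a' = f1 y" using e1(6)[OF y] h(1) x(3) by simp
    moreover have "b' = f2 y" using e2(6)[OF y] h(2) x(2) by simp
    ultimately show ?thesis using gl_f2[OF yU] by simp
  qed
  have C1: "Inl y = gl y'" if h: "F1 M1 z x = Some y" "F1 M2 z' x' = Some y'" "Inl z = gl z'" "Inl x = gl x'"
    for z x z' x' y y'
  proof -
    obtain z0 where z0: "z0 \<in> univ M0" "z' = f2 z0" "z = f1 z0" using cq[OF h(3)] by blast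
    obtain x0 where x0: "x0 \<in> univ M0" "x' = f2 x0" "x = f1 x0" using cq[OF h(4)] by blast
    have "f1 z0 \<in> Q2 M1 \<and> f1 x0 \<in> Q0 M1" using t1(7) h(1) z0(3) x0(3) by blast
    then have "z0 \<in> Q2 M0" "x0 \<in> Q0 M0" using e1(5)[OF z0(1)] e1(3)[OF x0(1)] by simp_all
    then obtain y0 where y0: "F1 M0 z0 x0 = Some y0" using T0plusD(3)[OF P0] by blast
    have yU: "y0 \<in> univ M0" using d0(2)[OF y0] by simp
    have "y = f1 y0" using e1(7)[OF y0] h(1) z0(3) x0(3) by simp
    moreover have "y' = f2 y0" using e2(7)[OF y0] h(2) z0(2) x0(2) by simp
    ultimately show ?thesis using gl_f2[OF yU] by simp
  qed
  have C2: "Inl a' = gl b'" if h: "F2 M1 a = Some a'" "F2 M2 b = Some b'" "Inl a = gl b" for a b a' b'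
  proof -
    obtain x where x: "x \<in> univ M0" "b = f2 x" "a = f1 x" using cq[OF h(3)] by blast
    have "f1 x \<in> Q0 M1" using t1(8) h(1) x(3) by blast
    then have "x \<in> Q0 M0" using e1(3)[OF x(1)] by simp
    then obtain y where y: "F2 M0 x = Some y" using T0plusD(4)[OF P0] by blast
    have yU: "y \<in> univ M0" using d0(3)[OF y] by simp
    have "a' = f1 y" using e1(8)[OF y] h(1) x(3) by simp
    moreover have "b' = f2 y" using e2(8)[OF y] h(2) x(2) by simp
    ultimately show ?thesis using gl_f2[OF yU] by simp
  qed
  have C3: "Inl a' = gl b'" if h: "F3 M1 a = Some a'" "F3 M2 b = Some b'" "Inl a = gl b" for a b a' b'
  proof -
    obtain x where x: "x \<in> univ M0" "b = f2 x" "a = f1 x" using cq[OF h(3)] by blast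
    have "f1 x \<in> Q2 M1" using t1(9) h(1) x(3) by blast
    then have "x \<in> Q2 M0" using e1(5)[OF x(1)] by simp
    then obtain y where y: "F3 M0 x = Some y" using T0plusD(5)[OF P0] by blast
    have yU: "y \<in> univ M0" using d0(4)[OF y] by simp
    have "a' = f1 y" using e1(9)[OF y] h(1) x(3) by simp
    moreover have "b' = f2 y" using e2(9)[OF y] h(2) x(2) by simp
    ultimately show ?thesis using gl_f2[OF yU] by simp
  qed
  have G: "T0 (U Inl M1 gl M2) \<and> embedding Inl M1 (U Inl M1 gl M2) \<and> embedding gl M2 (U Inl M1 gl M2)"
    by (rule U_ok[OF T1 T2 i1 igl c0 c1 c2 C0 C1 C2 C3])
  then obtain N :: "(('b + 'c) \<times> nat) str" and h where N: "T0plus N" "embedding h (U Inl M1 gl M2) N"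
    using part4 by blast
  have g1: "embedding Inl M1 (U Inl M1 gl M2)" and g2: "embedding gl M2 (U Inl M1 gl M2)" using G by simp_all
  have "embedding (h \<circ> Inl) M1 N" "embedding (h \<circ> gl) M2 N" using emb_comp[OF g1 N(2)] emb_comp[OF g2 N(2)] by simp_all
  moreover have "\<forall>x\<in>univ M0. (h \<circ> Inl) (f1 x) = (h \<circ> gl) (f2 x)" using gl_f2 by simp
  ultimately show ?thesis using N(1) by blast
qed


theorem claim2p4:
  shows
  "(\<forall>M :: 'a str. T0plus M \<longrightarrow>
      Q0 M \<noteq> {} \<and> Q1 M \<noteq> {} \<and> Q2 M \<noteq> {} \<and> onto_F0 M \<and> onto_F3 M)
 \<and> ((\<forall>M :: 'a str. T0 M \<and> Q0 M \<noteq> {} \<and> Q2 M \<noteq> {} \<and> onto_F0 M \<and> onto_F3 M \<longrightarrow>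
        (\<exists>N. T0plus N \<and> extends_same_univ M N))
    \<and> (\<forall>M :: 'a str. T0plus M \<longrightarrow> T0 M))
 \<and> (\<exists>M :: nat str. T0 M \<and> Q0 M \<noteq> {} \<and> Q2 M \<noteq> {} \<and> onto_F3 M \<and>
        \<not> (\<exists>N. T0plus N \<and> extends_same_univ M N))
 \<and> (\<forall>M :: 'a str. T0 M \<longrightarrow>
        (\<exists>(N :: ('a \<times> nat) str) h. T0plus N \<and> embedding h M N))
 \<and> (\<forall>(M0 :: 'a str) (M1 :: 'b str) (M2 :: 'c str) f1 f2.
        T0plus M0 \<and> T0plus M1 \<and> T0plus M2 \<and> embedding f1 M0 M1 \<and> embedding f2 M0 M2 \<longrightarrow>
        (\<exists>(N :: (('b + 'c) \<times> nat) str) g1 g2.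
           T0plus N \<and> embedding g1 M1 N \<and> embedding g2 M2 N \<and>
           (\<forall>x\<in>univ M0. g1 (f1 x) = g2 (f2 x))))
 \<and> (\<forall>(M1 :: 'b str) (M2 :: 'c str). T0plus M1 \<and> T0plus M2 \<longrightarrow>
        (\<exists>(N :: (('b + 'c) \<times> nat) str) g1 g2.
           T0plus N \<and> embedding g1 M1 N \<and> embedding g2 M2 N))"
proof -
  have A: "\<forall>M :: 'a str. T0plus M \<longrightarrow>
      Q0 M \<noteq> {} \<and> Q1 M \<noteq> {} \<and> Q2 M \<noteq> {} \<and> onto_F0 M \<and> onto_F3 M"
    using part1 by blast
  have B: "\<forall>M :: 'a str. T0 M \<and> Q0 M \<noteq> {} \<and> Q2 M \<noteq> {} \<and> onto_F0 M \<and> onto_F3 M \<longrightarrow>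
        (\<exists>N. T0plus N \<and> extends_same_univ M N)"
    using part2a by blast
  have B2: "\<forall>M :: 'a str. T0plus M \<longrightarrow> T0 M" using part2b by blast
  have C: "\<exists>M :: nat str. T0 M \<and> Q0 M \<noteq> {} \<and> Q2 M \<noteq> {} \<and> onto_F3 M \<and>
        \<not> (\<exists>N. T0plus N \<and> extends_same_univ M N)" by (rule part3)
  have D: "\<forall>M :: 'a str. T0 M \<longrightarrow>
        (\<exists>(N :: ('a \<times> nat) str) h. T0plus N \<and> embedding h M N)" using part4 by blast
  have E: "\<forall>(M0 :: 'a str) (M1 :: 'b str) (M2 :: 'c str) f1 f2.
        T0plus M0 \<and> T0plus M1 \<and> T0plus M2 \<and> embedding f1 M0 M1 \<and> embedding f2 M0 M2 \<longrightarrow>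
        (\<exists>(N :: (('b + 'c) \<times> nat) str) g1 g2.
           T0plus N \<and> embedding g1 M1 N \<and> embedding g2 M2 N \<and>
           (\<forall>x\<in>univ M0. g1 (f1 x) = g2 (f2 x)))"
  proof (intro allI impI)
    fix M0 :: "'a str" and M1 :: "'b str" and M2 :: "'c str" and f1 f2
    assume h: "T0plus M0 \<and> T0plus M1 \<and> T0plus M2 \<and> embedding f1 M0 M1 \<and> embedding f2 M0 M2"
    show "\<exists>(N :: (('b + 'c) \<times> nat) str) g1 g2.
           T0plus N \<and> embedding g1 M1 N \<and> embedding g2 M2 N \<and>
           (\<forall>x\<in>univ M0. g1 (f1 x) = g2 (f2 x))"
      using h by (intro AP) simp_all
  qed
  have F: "\<forall>(M1 :: 'b str) (M2 :: 'c str). T0plus M1 \<and> T0plus M2 \<longrightarrow>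
        (\<exists>(N :: (('b + 'c) \<times> nat) str) g1 g2.
           T0plus N \<and> embedding g1 M1 N \<and> embedding g2 M2 N)"
    using JEP by blast
  show ?thesis using A B B2 C D E F by (intro conjI) assumption+
qed

end
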